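(* Let $G$ be a connected graph containing two adjacent vertices $v_0,v_1$ such that the distance in $G$ from $v_0$ to every other vertex of $G$ is less than $\mathrm{diam}(G)$. Let $G'$ be obtained from $G$ by adding new vertices $v_2,v_3,\dots,v_n$ and the edges $v_1v_2, v_2v_3,\dots,v_{n-1}v_n$ and $v_0v_2, v_0v_3,\dots,v_0v_n$. Then $\mathrm{diam}(G')=\mathrm{diam}(G)$.
   Context: $\mathrm{diam}(G)$ denotes the diameter of a connected graph $G$, the maximum distance between two of its vertices. The vertices $v_2,\dots,v_n$ are new vertices not in $G$. *)

theory Defs
  imports Main
begin

definition simple_graph :: "'a set \<Rightarrow> ('a \<Rightarrow> 'a \<Rightarrow> bool) \<Rightarrow> bool" where
  "simple_graph V E \<longleftrightarrow> finite V \<and> (\<forall>x y. E x y \<longrightarrow> x \<in> V \<and> y \<in> V)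
     \<and> (\<forall>x y. E x y \<longrightarrow> E y x) \<and> (\<forall>x. \<not> E x x)"

definition walk :: "'a set \<Rightarrow> ('a \<Rightarrow> 'a \<Rightarrow> bool) \<Rightarrow> 'a list \<Rightarrow> bool" where
  "walk V E xs \<longleftrightarrow> xs \<noteq> [] \<and> set xs \<subseteq> V \<and> (\<forall>i. Suc i < length xs \<longrightarrow> E (xs ! i) (xs ! Suc i))"

definition connected_graph :: "'a set \<Rightarrow> ('a \<Rightarrow> 'a \<Rightarrow> bool) \<Rightarrow> bool" where
  "connected_graph V E \<longleftrightarrow> V \<noteq> {} \<and>
     (\<forall>u\<in>V. \<forall>w\<in>V. \<exists>xs. walk V E xs \<and> hd xs = u \<and> last xs = w)"

definition dist :: "'a set \<Rightarrow> ('a \<Rightarrow> 'a \<Rightarrow> bool) \<Rightarrow> 'a \<Rightarrow> 'a \<Rightarrow> nat" where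
  "dist V E u w = (LEAST k. \<exists>xs. walk V E xs \<and> hd xs = u \<and> last xs = w \<and> length xs = Suc k)"

definition diam :: "'a set \<Rightarrow> ('a \<Rightarrow> 'a \<Rightarrow> bool) \<Rightarrow> nat" where
  "diam V E = Max {dist V E u w | u w. u \<in> V \<and> w \<in> V}"

end

theory Submission
  imports Defs
begin

lemma walk_single[simp]: "walk V E [x] \<longleftrightarrow> x \<in> V"
  unfolding walk_def by auto

lemma walk_cons2[simp]: "walk V E (x # y # zs) \<longleftrightarrow> x \<in> V \<and> E x y \<and> walk V E (y # zs)"
  unfolding walk_def
  by (auto simp: nth_Cons split: nat.splits)

lemma walk_cons: "ys \<noteq> [] \<Longrightarrow> walk V E (x # ys) \<longleftrightarrow> x \<in> V \<and> E x (hd ys) \<and> walk V E ys"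
  by (cases ys) auto

lemma walk_rev:
  assumes "\<forall>x y. E x y \<longrightarrow> E y x" "walk V E xs"
  shows "walk V E (rev xs)"
  unfolding walk_def
proof (intro conjI allI impI)
  show "rev xs \<noteq> []" "set (rev xs) \<subseteq> V" using assms(2) unfolding walk_def by auto
  fix i assume i: "Suc i < length (rev xs)"
  let ?j = "length xs - Suc (Suc i)"
  have "Suc ?j < length xs" using i by auto
  then have "E (xs ! ?j) (xs ! Suc ?j)" using assms(2) unfolding walk_def by blast
  moreover have "rev xs ! i = xs ! Suc ?j" "rev xs ! Suc i = xs ! ?j"
    using i by (auto simp: rev_nth Suc_diff_Suc)
  ultimately show "E (rev xs ! i) (rev xs ! Suc i)" using assms(1) by auto
qed

lemma dist_sym:
  assumes "\<forall>x y. E x y \<longrightarrow> E y x"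
  shows "dist V E u w = dist V E w u"
proof -
  have "\<And>k u w. (\<exists>xs. walk V E xs \<and> hd xs = u \<and> last xs = w \<and> length xs = Suc k)
     \<Longrightarrow> (\<exists>xs. walk V E xs \<and> hd xs = w \<and> last xs = u \<and> length xs = Suc k)"
  proof -
    fix k u w assume "\<exists>xs. walk V E xs \<and> hd xs = u \<and> last xs = w \<and> length xs = Suc k"
    then obtain xs where xs: "walk V E xs" "hd xs = u" "last xs = w" "length xs = Suc k" by blast
    then have "xs \<noteq> []" unfolding walk_def by auto
    then show "\<exists>xs. walk V E xs \<and> hd xs = w \<and> last xs = u \<and> length xs = Suc k"
      using xs walk_rev[OF assms xs(1)] by (intro exI[of _ "rev xs"]) (auto simp: hd_rev last_rev)
  qed
  then have "(\<lambda>k. \<exists>xs. walk V E xs \<and> hd xs = u \<and> last xs = w \<and> length xs = Suc k)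
    = (\<lambda>k. \<exists>xs. walk V E xs \<and> hd xs = w \<and> last xs = u \<and> length xs = Suc k)"
    by (intro ext iffI) blast+
  then show ?thesis unfolding dist_def by simp
qed

lemma dist_le:
  assumes "walk V E xs" "hd xs = u" "last xs = w"
  shows "dist V E u w \<le> length xs - 1"
proof -
  have "xs \<noteq> []" using assms unfolding walk_def by auto
  then have "length xs = Suc (length xs - 1)" by auto
  then show ?thesis unfolding dist_def using assms by (intro Least_le) blast
qed

lemma dist_ex:
  assumes "walk V E xs" "hd xs = u" "last xs = w"
  shows "\<exists>ys. walk V E ys \<and> hd ys = u \<and> last ys = w \<and> length ys = Suc (dist V E u w)"
proof -
  have "xs \<noteq> []" using assms unfolding walk_def by auto
  then have "length xs = Suc (length xs - 1)" by auto
  then have "\<exists>k. \<exists>xs. walk V E xs \<and> hd xs = u \<and> last xs = w \<and> length xs = Suc k" using assms by blast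
  then show ?thesis unfolding dist_def by (rule LeastI_ex)
qed

lemma conn_dist_ex:
  assumes "connected_graph V E" "u \<in> V" "w \<in> V"
  shows "\<exists>ys. walk V E ys \<and> hd ys = u \<and> last ys = w \<and> length ys = Suc (dist V E u w)"
proof -
  obtain xs where "walk V E xs" "hd xs = u" "last xs = w"
    using assms unfolding connected_graph_def by blast
  then show ?thesis by (rule dist_ex)
qed

fun lw :: "'a set \<Rightarrow> ('a \<Rightarrow> 'a \<Rightarrow> bool) \<Rightarrow> 'a list \<Rightarrow> bool" where
  "lw V E [] = False"
| "lw V E [x] = (x \<in> V)"
| "lw V E (x # y # zs) = (x \<in> V \<and> (x = y \<or> E x y) \<and> lw V E (y # zs))"

lemma lw_reduce:
  "lw V E xs \<Longrightarrow> \<exists>ys. walk V E ys \<and> hd ys = hd xs \<and> last ys = last xs \<and> length ys \<le> length xs"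
proof (induction V E xs rule: lw.induct)
  case (1 V E) then show ?case by simp
next
  case (2 V E x) then show ?case by (intro exI[of _ "[x]"]) auto
next
  case (3 V E x y zs)
  then obtain ys where ys: "walk V E ys" "hd ys = y" "last ys = last (y # zs)" "length ys \<le> length (y # zs)"
    by auto
  have ne: "ys \<noteq> []" using ys unfolding walk_def by auto
  show ?case
  proof (cases "x = y")
    case True then show ?thesis using ys by (intro exI[of _ ys]) auto
  next
    case False
    then have "walk V E (x # ys)" using 3(2) ys ne by (simp add: walk_cons)
    then show ?thesis using ys ne by (intro exI[of _ "x # ys"]) auto
  qed
qed

lemma lw_map:
  assumes "walk V' E' xs" "\<forall>x\<in>V'. p x \<in> V"
    "\<forall>x y. x \<in> V' \<longrightarrow> y \<in> V' \<longrightarrow> E' x y \<longrightarrow> p x = p y \<or> E (p x) (p y)"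
  shows "lw V E (map p xs)"
  using assms(1)
proof (induction xs rule: induct_list012)
  case 1 then show ?case by (simp add: walk_def)
next
  case (2 x) then have "x \<in> V'" by simp
  then have "p x \<in> V" using assms(2) by blast
  then show ?case by simp
next
  case (3 x y zs)
  have h0: "x \<in> V' \<and> E' x y \<and> walk V' E' (y#zs)" using "3.prems" by (simp only: walk_cons2)
  then have h: "x \<in> V'" "E' x y" "walk V' E' (y#zs)" "y \<in> V'" by (auto simp only: walk_def set_simps)
  have a: "lw V E (p y # map p zs)" using "3.IH"(2) h(3) by simp
  have b: "p x = p y \<or> E (p x) (p y)" using assms(3) h by blast
  have c: "p x \<in> V" using assms(2) h by blast
  have "lw V E (p x # p y # map p zs)" unfolding lw.simps using a b c by blast
  then show ?case by simp
qed

lemma diam_ge: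
  assumes "finite V" "u \<in> V" "w \<in> V"
  shows "dist V E u w \<le> diam V E"
proof -
  have "{dist V E u w | u w. u \<in> V \<and> w \<in> V} = (\<lambda>(u,w). dist V E u w) ` (V \<times> V)" by auto
  then have "finite {dist V E u w | u w. u \<in> V \<and> w \<in> V}" using assms by simp
  then show ?thesis unfolding diam_def using assms by (intro Max_ge) auto
qed

lemma diam_attained:
  assumes "finite V" "V \<noteq> {}"
  shows "\<exists>u\<in>V. \<exists>w\<in>V. dist V E u w = diam V E"
proof -
  have "{dist V E u w | u w. u \<in> V \<and> w \<in> V} = (\<lambda>(u,w). dist V E u w) ` (V \<times> V)" by auto
  then have "finite {dist V E u w | u w. u \<in> V \<and> w \<in> V}" using assms by simp
  moreover have "{dist V E u w | u w. u \<in> V \<and> w \<in> V} \<noteq> {}" using assms by auto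
  ultimately have "diam V E \<in> {dist V E u w | u w. u \<in> V \<and> w \<in> V}"
    unfolding diam_def by (rule Max_in)
  then obtain u w where "diam V E = dist V E u w" "u \<in> V" "w \<in> V" by blast
  then show ?thesis by auto
qed

lemma diam_le:
  assumes "finite V" "V \<noteq> {}" "\<forall>u\<in>V. \<forall>w\<in>V. dist V E u w \<le> k"
  shows "diam V E \<le> k"
proof -
  obtain u w where "u \<in> V" "w \<in> V" "dist V E u w = diam V E"
    using diam_attained[OF assms(1,2), of E] by blast
  then show ?thesis using assms(3) by metis
qed

theorem theorem3p3:
  fixes V :: "'a set" and E :: "'a \<Rightarrow> 'a \<Rightarrow> bool" and v :: "nat \<Rightarrow> 'a" and n :: nat
  assumes "simple_graph V E" and "connected_graph V E"
    and "v 0 \<in> V" and "v 1 \<in> V" and "E (v 0) (v 1)"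
    and "\<forall>w\<in>V. w \<noteq> v 0 \<longrightarrow> dist V E (v 0) w < diam V E"
    and "n \<ge> 2"
    and "inj_on v {0..n}"
    and "\<forall>i\<in>{2..n}. v i \<notin> V"
  shows "diam (V \<union> v ` {2..n})
           (\<lambda>x y. E x y
              \<or> (\<exists>i\<in>{2..n}. (x = v (i - 1) \<and> y = v i) \<or> (x = v i \<and> y = v (i - 1)))
              \<or> (\<exists>i\<in>{2..n}. (x = v 0 \<and> y = v i) \<or> (x = v i \<and> y = v 0)))
         = diam V E"
proof -
  define V' where "V' = V \<union> v ` {2..n}"
  define E' where "E' = (\<lambda>x y. E x y
              \<or> (\<exists>i\<in>{2..n}. (x = v (i - 1) \<and> y = v i) \<or> (x = v i \<and> y = v (i - 1)))
              \<or> (\<exists>i\<in>{2..n}. (x = v 0 \<and> y = v i) \<or> (x = v i \<and> y = v 0)))"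
  let ?D = "diam V E"
  have fin: "finite V" using assms(1) unfolding simple_graph_def by blast
  have Esym: "\<forall>x y. E x y \<longrightarrow> E y x" using assms(1) unfolding simple_graph_def by blast
  have Eirr: "\<forall>x. \<not> E x x" using assms(1) unfolding simple_graph_def by blast
  have EV: "\<forall>x y. E x y \<longrightarrow> x \<in> V \<and> y \<in> V" using assms(1) unfolding simple_graph_def by blast
  have finV': "finite V'" unfolding V'_def using fin by simp
  have V'ne: "V' \<noteq> {}" unfolding V'_def using assms(3) by auto
  have E'sym: "\<forall>x y. E' x y \<longrightarrow> E' y x"
  proof (intro allI impI)
    fix x y assume "E' x y"
    moreover have "E x y \<longrightarrow> E y x" using Esym by blast
    ultimately show "E' y x" unfolding E'_def by meson
  qed
  have EE': "\<And>x y. E x y \<Longrightarrow> E' x y" unfolding E'_def by simp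
  have VV': "V \<subseteq> V'" unfolding V'_def by auto
  have walk_lift: "\<And>xs. walk V E xs \<Longrightarrow> walk V' E' xs"
    unfolding walk_def using EE' VV' by blast
  have v01: "v 0 \<noteq> v 1" using assms(5) Eirr by metis
  have d01: "dist V E (v 0) (v 1) < ?D" using assms(6) assms(4) v01 by auto
  have "dist V E (v 0) (v 1) \<ge> 1"
  proof -
    obtain xs where xs: "walk V E xs" "hd xs = v 0" "last xs = v 1"
      "length xs = Suc (dist V E (v 0) (v 1))"
      using dist_ex[of V E "[v 0, v 1]" "v 0" "v 1"] assms(3,4,5) by auto
    show ?thesis
    proof (rule ccontr)
      assume "\<not> ?thesis"
      then have "length xs = 1" using xs by simp
      then obtain a where "xs = [a]" by (cases xs) auto
      then show False using xs v01 by simp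
    qed
  qed
  then have D2: "?D \<ge> 2" using d01 by simp
  have d0: "\<And>w. w \<in> V \<Longrightarrow> dist V E (v 0) w + 1 \<le> ?D"
  proof -
    fix w assume w: "w \<in> V"
    show "dist V E (v 0) w + 1 \<le> ?D"
    proof (cases "w = v 0")
      case True
      have "dist V E (v 0) w \<le> length [v 0] - 1" using True assms(3) by (intro dist_le) auto
      then show ?thesis using D2 by simp
    next
      case False
      have "dist V E (v 0) w < ?D" using assms(6) w False by blast
      then show ?thesis by simp
    qed
  qed
  have newV: "\<And>x. x \<in> V' \<Longrightarrow> x \<notin> V \<Longrightarrow> E' x (v 0)"
    unfolding V'_def E'_def by auto
  have up_new: "\<And>x w. x \<in> V' \<Longrightarrow> x \<notin> V \<Longrightarrow> w \<in> V \<Longrightarrow> dist V' E' x w \<le> ?D"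
  proof -
    fix x w assume x: "x \<in> V'" "x \<notin> V" and w: "w \<in> V"
    have "walk V E [v 0] \<and> hd [v 0] = v 0 \<and> last [v 0] = v 0" using assms(3) by simp
    obtain ys where ys: "walk V E ys" "hd ys = v 0" "last ys = w" "length ys = Suc (dist V E (v 0) w)"
      using conn_dist_ex[OF assms(2) assms(3) w] by blast
    have ne: "ys \<noteq> []" using ys by auto
    have "walk V' E' (x # ys)" using walk_lift[OF ys(1)] ne ys(2) newV[OF x] x(1)
      by (simp add: walk_cons)
    then have "dist V' E' x w \<le> length (x # ys) - 1" using ys ne by (intro dist_le) auto
    then show "dist V' E' x w \<le> ?D" using ys d0[OF w] by simp
  qed
  have up: "\<forall>x\<in>V'. \<forall>y\<in>V'. dist V' E' x y \<le> ?D"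
  proof (intro ballI)
    fix x y assume x: "x \<in> V'" and y: "y \<in> V'"
    show "dist V' E' x y \<le> ?D"
    proof (cases "x \<in> V")
      case xV: True
      show ?thesis
      proof (cases "y \<in> V")
        case True
        obtain ys where ys: "walk V E ys" "hd ys = x" "last ys = y" "length ys = Suc (dist V E x y)"
          using conn_dist_ex[OF assms(2) xV True] by blast
        have "dist V' E' x y \<le> length ys - 1" using walk_lift[OF ys(1)] ys by (intro dist_le) auto
        then show ?thesis using ys diam_ge[OF fin xV True, of E] by simp
      next
        case False
        have "dist V' E' x y = dist V' E' y x" by (rule dist_sym[OF E'sym])
        then show ?thesis using up_new[OF y False xV] by simp
      qed
    next
      case xn: False
      show ?thesis
      proof (cases "y \<in> V")
        case True then show ?thesis using up_new[OF x xn True] by simp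
      next
        case False
        have "E' (v 0) y" using newV[OF y False] E'sym by blast
        then have "walk V' E' [x, v 0, y]" using newV[OF x xn] x y VV' assms(3)
          by auto
        then have "dist V' E' x y \<le> length [x, v 0, y] - 1" by (intro dist_le) auto
        then show ?thesis using D2 by simp
      qed
    qed
  qed
  have le: "diam V' E' \<le> ?D" using diam_le[OF finV' V'ne up] .
  obtain u w where uw: "u \<in> V" "w \<in> V" "dist V E u w = ?D"
    using diam_attained[OF fin, of E] assms(3) by blast
  define p where "p x = (if x \<in> V then x else v 0)" for x
  have pV: "\<forall>x\<in>V'. p x \<in> V" unfolding p_def using assms(3) by auto
  have pE: "\<forall>x y. x \<in> V' \<longrightarrow> y \<in> V' \<longrightarrow> E' x y \<longrightarrow> p x = p y \<or> E (p x) (p y)"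
  proof (intro allI impI)
    fix x y assume x: "x \<in> V'" and y: "y \<in> V'" and e: "E' x y"
    show "p x = p y \<or> E (p x) (p y)"
    proof (cases "E x y")
      case True then show ?thesis using EV unfolding p_def by auto
    next
      case False
      then consider (a) i where "i \<in> {2..n}" "x = v (i - 1)" "y = v i"
        | (b) i where "i \<in> {2..n}" "x = v i" "y = v (i - 1)"
        | (c) i where "i \<in> {2..n}" "x = v 0" "y = v i"
        | (d) i where "i \<in> {2..n}" "x = v i" "y = v 0"
        using e unfolding E'_def by blast
      then show ?thesis
      proof cases
        case a
        show ?thesis
        proof (cases "i = 2")
          case True
          have "E (v 1) (v 0)" using Esym assms(5) by blast
          then show ?thesis using True a assms(4,9) unfolding p_def by auto
        next
          case False
          then have "i - 1 \<in> {2..n}" using a by auto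
          then show ?thesis using a assms(9) unfolding p_def by auto
        qed
      next
        case b
        show ?thesis
        proof (cases "i = 2")
          case True
          have "E (v 1) (v 0)" using Esym assms(5) by blast
          then show ?thesis using True b assms(4,5,9) unfolding p_def by auto
        next
          case False
          then have "i - 1 \<in> {2..n}" using b by auto
          then show ?thesis using b assms(9) unfolding p_def by auto
        qed
      next
        case c then show ?thesis using assms(9) unfolding p_def by auto
      next
        case d then show ?thesis using assms(9) unfolding p_def by auto
      qed
    qed
  qed
  obtain ys0 where ys0: "walk V E ys0" "hd ys0 = u" "last ys0 = w"
    using assms(2) uw unfolding connected_graph_def by blast
  obtain xs where xs: "walk V' E' xs" "hd xs = u" "last xs = w" "length xs = Suc (dist V' E' u w)"
    using dist_ex[OF walk_lift[OF ys0(1)] ys0(2,3)] by blast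
  have ne: "xs \<noteq> []" using xs by auto
  have "lw V E (map p xs)" using lw_map[OF xs(1) pV pE] .
  then obtain zs where zs: "walk V E zs" "hd zs = hd (map p xs)" "last zs = last (map p xs)"
    "length zs \<le> length (map p xs)" using lw_reduce by blast
  have "hd (map p xs) = u" "last (map p xs) = w" using ne xs uw unfolding p_def
    by (auto simp: hd_map last_map)
  then have "dist V E u w \<le> length zs - 1" using zs by (intro dist_le) auto
  then have "?D \<le> dist V' E' u w" using zs xs uw by simp
  also have "\<dots> \<le> diam V' E'" using diam_ge[OF finV'] uw VV' by auto
  finally have "?D \<le> diam V' E'" .
  with le have "diam V' E' = ?D" by simp
  then show ?thesis unfolding V'_def E'_def .
qed

end
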